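(* Let $k\in L^1([0,\infty);(0,\infty))\cap C([0,\infty);(0,\infty))$ with $\lambda(t):=\int_t^\infty k(s)\,ds=L(t)t^{-\alpha}$ for some $\alpha>1$ and some $L$ slowly varying at infinity, and let $a=-\int_0^\infty k(s)\,ds$. Then $\int_0^\infty sk(s)\,ds<\infty$ and the resolvent $r$ (unique continuous solution of $r'(t)=ar(t)+\int_0^tk(t-s)r(s)\,ds$, $r(0)=1$) satisfies $$\lim_{t\to\infty}r(t)=\Big(1+\int_0^\infty sk(s)\,ds\Big)^{-1}.$$
   Context: $L:[0,\infty)\to(0,\infty)$ is slowly varying at infinity if $L(xt)/L(t)\to1$ as $t\to\infty$ for every $x>0$. *)

theory Defs
  imports "HOL-Analysis.Analysis"
begin

definition slowly_varying :: "(real \<Rightarrow> real) \<Rightarrow> bool" where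
  "slowly_varying L \<longleftrightarrow> (\<forall>t\<ge>0. L t > 0) \<and>
     (\<forall>x>0. ((\<lambda>t. L (x * t) / L t) \<longlongrightarrow> 1) at_top)"

end

theory Submission
  imports Defs
begin



lemma integral_flip:
  fixes f :: "real \<Rightarrow> real"
  shows "integral {0..t} (\<lambda>s. f (t - s)) = integral {0..t} f"
proof -
  have "integral {0..t} f = integral {0 + -t..t + -t} (\<lambda>x. f (-x))"
    using Henstock_Kurzweil_Integration.integral_reflect_real[of t 0 f] by simp
  also have "\<dots> = integral {0..t} ((\<lambda>x. f (-x)) \<circ> (+) (-t))"
    by (rule integral_shift_Icc_real[symmetric])
  also have "\<dots> = integral {0..t} (\<lambda>s. f (t - s))" by (simp add: o_def)
  finally show ?thesis by simp
qed

lemma integrable_flip: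
  fixes f :: "real \<Rightarrow> real"
  assumes "f integrable_on {0..t}"
  shows "(\<lambda>s. f (t - s)) integrable_on {0..t}"
proof -
  have "(\<lambda>x. f (-x)) integrable_on {0 + -t..t + -t}" using assms Henstock_Kurzweil_Integration.integrable_reflect_real[where a=0 and b=t and f=f] by simp
  hence "((\<lambda>x. f (-x)) \<circ> (+) (-t)) integrable_on {0..t}"
    using integrable_on_shift_Icc_real by blast
  thus ?thesis by (simp add: o_def)
qed

locale kset =
  fixes k :: "real \<Rightarrow> real"
  assumes k_cont: "continuous_on {0..} k"
    and k_pos: "\<And>t. t \<ge> 0 \<Longrightarrow> k t > 0"
    and k_int: "k integrable_on {0..}"
begin

definition K where "K = integral {0..} k"
definition lam where "lam t = integral {t..} k"

lemma k_int_Ici: assumes "t \<ge> 0" shows "k integrable_on {t..}"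
proof -
  have "k absolutely_integrable_on {0..}"
    by (rule nonnegative_absolutely_integrable_1[OF k_int]) (auto intro: less_imp_le k_pos)
  hence "k absolutely_integrable_on {t..}"
    by (rule set_integrable_subset) (use assms in auto)
  thus ?thesis using absolutely_integrable_on_def by blast
qed

lemma k_int_Icc: assumes "0 \<le> a" shows "k integrable_on {a..b}"
  by (rule integrable_continuous_interval) (rule continuous_on_subset[OF k_cont], use assms in auto)

lemma K_split: assumes "t \<ge> 0" shows "K = integral {0..t} k + lam t"
proof -
  have "{0..} = {0..t} \<union> {t..}" using assms by auto
  moreover have "negligible ({0..t} \<inter> {t..})"
  proof -
    have "{0..t} \<inter> {t..} = {t}" using assms by auto
    thus ?thesis by simp
  qed
  ultimately show ?thesis unfolding K_def lam_def
    using integral_Un[OF k_int_Icc k_int_Ici] assms by auto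
qed

lemma lam_nonneg: "lam t \<ge> 0" if "t \<ge> 0"
  unfolding lam_def by (rule integral_nonneg[OF k_int_Ici]) (use that k_pos in \<open>auto intro: less_imp_le\<close>)

lemma intk_nonneg: "integral {0..t} k \<ge> 0"
proof (cases "t \<ge> 0")
  case True thus ?thesis
    by (intro integral_nonneg k_int_Icc) (auto intro: less_imp_le k_pos)
qed simp

lemma K_nonneg: "K \<ge> 0" using K_split[of 0] lam_nonneg[of 0] by simp
lemma lam0: "lam 0 = K" using K_split[of 0] by simp

lemma lam_le_K: "t \<ge> 0 \<Longrightarrow> lam t \<le> K" using K_split intk_nonneg by force

lemma lam_deriv: assumes "t \<ge> 0"
  shows "(lam has_real_derivative - k t) (at t within {0..})"
proof -
  have "((\<lambda>x. integral {0..x} k) has_real_derivative k t) (at t within {0..t+1})"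
    by (rule integral_has_real_derivative) (auto intro: continuous_on_subset[OF k_cont] simp: assms)
  hence "((\<lambda>x. integral {0..x} k) has_real_derivative k t) (at t within {0..})"
    by (subst at_within_nhd[where S="{..<t+1}"]) auto
  hence "((\<lambda>x. K - integral {0..x} k) has_real_derivative - k t) (at t within {0..})"
    by (auto intro!: derivative_eq_intros)
  thus ?thesis
    by (rule has_field_derivative_transform_within[where d=1]) (use assms K_split in auto)
qed

lemma lam_cont: "continuous_on {0..} lam"
  unfolding continuous_on_eq_continuous_within
  using lam_deriv DERIV_continuous by (metis atLeast_iff)

lemma lam_mono: assumes "0 \<le> s" "s \<le> t" shows "lam t \<le> lam s"
proof -
  have "integral {0..s} k + integral {s..t} k = integral {0..t} k"
    by (rule Henstock_Kurzweil_Integration.integral_combine[of 0 s t k]) (use assms in \<open>auto intro: k_int_Icc\<close>)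
  moreover have "integral {s..t} k \<ge> 0"
    using assms by (intro integral_nonneg k_int_Icc) (auto intro: less_imp_le[OF k_pos])
  ultimately show ?thesis using K_split[of s] K_split[of t] assms by linarith
qed

end





lemma doubling_bound:
  fixes f :: "real \<Rightarrow> real" and e B T :: real
  assumes T: "T > 0" and e: "e \<le> 0" and B: "B \<ge> 0"
    and dbl: "\<And>t. t \<ge> T \<Longrightarrow> f (2*t) \<le> 2 powr e * f t"
    and base: "\<And>t. T \<le> t \<Longrightarrow> t \<le> 2*T \<Longrightarrow> f t \<le> B"
  shows "\<And>t. t \<ge> T \<Longrightarrow> f t \<le> B * (2*T) powr (-e) * t powr e"
proof -
  define C where "C = B * (2*T) powr (-e)"
  have C0: "C \<ge> 0" using B by (simp add: C_def)
  have P: "\<forall>t. T \<le> t \<and> t \<le> 2^n * T \<longrightarrow> f t \<le> C * t powr e" for n :: nat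
  proof (induction n)
    case 0
    show ?case
    proof (intro allI impI)
      fix t assume "T \<le> t \<and> t \<le> 2^0 * T"
      hence t: "t = T" by auto
      have "(2*T) powr e \<le> t powr e" using t T e by (intro powr_mono2') auto
      hence "B * ((2*T) powr (-e) * (2*T) powr e) \<le> B * ((2*T) powr (-e) * t powr e)"
        using B by (intro mult_left_mono) auto
      moreover have "(2*T) powr (-e) * (2*T) powr e = 1" using T by (simp add: powr_minus)
      ultimately show "f t \<le> C * t powr e" using base[of t] t T by (simp add: C_def mult.assoc)
    qed
  next
    case (Suc n)
    show ?case
    proof (intro allI impI)
      fix t assume t: "T \<le> t \<and> t \<le> 2^(Suc n) * T"
      show "f t \<le> C * t powr e"
      proof (cases "t \<le> 2*T")
        case True
        have "(2*T) powr e \<le> t powr e" using t T e True by (intro powr_mono2') auto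
        hence "B * ((2*T) powr (-e) * (2*T) powr e) \<le> B * ((2*T) powr (-e) * t powr e)"
          using B by (intro mult_left_mono) auto
        moreover have "(2*T) powr (-e) * (2*T) powr e = 1" using T by (simp add: powr_minus)
        ultimately show ?thesis using base[of t] t True by (simp add: C_def mult.assoc)
      next
        case False
        define u where "u = t/2"
        have u: "T \<le> u" "u \<le> 2^n * T" using t False by (auto simp: u_def)
        have "f t = f (2 * u)" by (simp add: u_def)
        also have "\<dots> \<le> 2 powr e * f u" using dbl u by auto
        also have "\<dots> \<le> 2 powr e * (C * u powr e)" using Suc u by (intro mult_left_mono) auto
        also have "\<dots> = C * (2*u) powr e" using T u by (simp add: powr_mult)
        finally show ?thesis by (simp add: u_def)
      qed
    qed
  qed
  fix t assume t: "t \<ge> T"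
  obtain n :: nat where "t / T < 2^n" using real_arch_pow[of 2 "t/T"] by auto
  hence "t \<le> 2^n * T" using T by (simp add: field_simps)
  thus "f t \<le> B * (2*T) powr (-e) * t powr e" using P[of n] t by (simp add: C_def)
qed

locale kdecay = kset +
  fixes \<alpha> :: real and L :: "real \<Rightarrow> real"
  assumes alpha: "\<alpha> > 1"
    and L_sv: "slowly_varying L"
    and tail: "\<forall>t>0. integral {t..} k = L t * t powr (- \<alpha>)"
begin

lemma lam_pos: "t > 0 \<Longrightarrow> lam t > 0"
  using tail L_sv unfolding lam_def slowly_varying_def by auto

lemma lam_ratio: "((\<lambda>t. lam (2*t) / lam t) \<longlongrightarrow> 2 powr (-\<alpha>)) at_top"
proof -
  have "((\<lambda>t. L (2 * t) / L t) \<longlongrightarrow> 1) at_top" using L_sv unfolding slowly_varying_def by auto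
  hence "((\<lambda>t. (L (2 * t) / L t) * 2 powr (-\<alpha>)) \<longlongrightarrow> 1 * 2 powr (-\<alpha>)) at_top"
    by (intro tendsto_mult tendsto_const)
  moreover have "\<forall>\<^sub>F t in at_top. (L (2 * t) / L t) * 2 powr (-\<alpha>) = lam (2*t) / lam t"
  proof (rule eventually_at_top_linorderI[of 1])
    fix t :: real assume t: "t \<ge> 1"
    have "L t > 0" using L_sv t unfolding slowly_varying_def by auto
    have "lam (2*t) / lam t = (L (2*t) * (2*t) powr (-\<alpha>)) / (L t * t powr (-\<alpha>))"
      using tail t unfolding lam_def by auto
    also have "\<dots> = (L (2 * t) / L t) * 2 powr (-\<alpha>)"
      using t \<open>L t > 0\<close> by (simp add: powr_mult field_simps)
    finally show "(L (2 * t) / L t) * 2 powr (-\<alpha>) = lam (2*t) / lam t" by simp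
  qed
  ultimately show ?thesis by (simp add: tendsto_cong)
qed

definition \<beta> where "\<beta> = (1 - \<alpha>) / 2"

lemma beta_neg: "\<beta> < 0" using alpha by (simp add: \<beta>_def)

lemma lam_dbl: "\<exists>T>0. \<forall>t\<ge>T. lam (2*t) \<le> 2 powr (\<beta> - 1) * lam t"
proof -
  have "-\<alpha> < \<beta> - 1" using alpha by (simp add: \<beta>_def field_simps)
  hence "2 powr (-\<alpha>) < 2 powr (\<beta> - 1)" by simp
  from order_tendstoD(2)[OF lam_ratio this]
  obtain T0 where T0: "\<And>t. t \<ge> T0 \<Longrightarrow> lam (2*t) / lam t < 2 powr (\<beta> - 1)"
    by (auto simp: eventually_at_top_linorder)
  define T where "T = max T0 1"
  have "\<forall>t\<ge>T. lam (2*t) \<le> 2 powr (\<beta> - 1) * lam t"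
  proof (intro allI impI)
    fix t assume "t \<ge> T"
    hence "t \<ge> T0" "t > 0" by (auto simp: T_def)
    with T0[of t] lam_pos[of t] show "lam (2*t) \<le> 2 powr (\<beta> - 1) * lam t"
      by (simp add: field_simps)
  qed
  thus ?thesis by (intro exI[of _ T]) (auto simp: T_def)
qed

lemma lam_power_bound: "\<exists>T>0. \<exists>C\<ge>0. \<forall>t\<ge>T. lam t \<le> C * t powr (\<beta> - 1)"
proof -
  obtain T where T: "T > 0" "\<And>t. t \<ge> T \<Longrightarrow> lam (2*t) \<le> 2 powr (\<beta> - 1) * lam t"
    using lam_dbl by auto
  have "\<And>t. t \<ge> T \<Longrightarrow> lam t \<le> lam T * (2*T) powr (-(\<beta> - 1)) * t powr (\<beta> - 1)"
    by (rule doubling_bound[of T "\<beta> - 1" "lam T" lam, OF T(1) _ _ T(2)]) (use beta_neg lam_nonneg T in \<open>auto intro: lam_mono\<close>)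
  moreover have "lam T * (2*T) powr (-(\<beta> - 1)) \<ge> 0" using lam_nonneg T by auto
  ultimately show ?thesis using T by blast
qed

end



lemma nonneg_int_Ici:
  fixes h :: "real \<Rightarrow> real"
  assumes "h integrable_on {a..}" "\<And>x. x \<ge> a \<Longrightarrow> h x \<ge> 0" "t \<ge> a"
  shows "h integrable_on {t..}"
proof -
  have "h absolutely_integrable_on {a..}"
    by (rule nonnegative_absolutely_integrable_1) (use assms in auto)
  hence "h absolutely_integrable_on {t..}"
    by (rule set_integrable_subset) (use assms in auto)
  thus ?thesis using absolutely_integrable_on_def by blast
qed

lemma split_Ici:
  fixes h :: "real \<Rightarrow> real"
  assumes "h integrable_on {a..}" "\<And>x. x \<ge> a \<Longrightarrow> h x \<ge> 0" "t \<ge> a"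
    and "h integrable_on {a..t}"
  shows "integral {a..} h = integral {a..t} h + integral {t..} h"
proof -
  have "{a..} = {a..t} \<union> {t..}" using assms by auto
  moreover have "negligible ({a..t} \<inter> {t..})"
  proof -
    have "{a..t} \<inter> {t..} = {t}" using assms by auto
    thus ?thesis by simp
  qed
  ultimately show ?thesis
    using integral_Un[OF assms(4) nonneg_int_Ici[OF assms(1,2,3)]] by auto
qed

context kdecay begin

lemma lam_int_Icc: "lam integrable_on {a..b}" if "a \<ge> 0"
  by (rule integrable_continuous_interval) (rule continuous_on_subset[OF lam_cont], use that in auto)

lemma lam_bound: obtains T C where "T > 0" "C \<ge> 0" "\<And>t. t \<ge> T \<Longrightarrow> lam t \<le> C * t powr (\<beta> - 1)"
proof -
  from lam_power_bound obtain T C where "T > 0" "C \<ge> 0" "\<forall>t\<ge>T. lam t \<le> C * t powr (\<beta> - 1)"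
    by blast
  show ?thesis 
    apply (rule that)
    using \<open>T > 0\<close> apply assumption
    using \<open>C \<ge> 0\<close> apply assumption
    using \<open>\<forall>t\<ge>T. lam t \<le> C * t powr (\<beta> - 1)\<close> by auto
qed

lemma lam_int: "lam integrable_on {0..}"
proof -
  obtain T C where T12: "T > 0" "C \<ge> 0" and T3: "\<forall>t\<ge>T. lam t \<le> C * t powr (\<beta> - 1)"
    using lam_power_bound by blast
  note T = T12 T3[rule_format]
  have e: "\<beta> - 1 < -1" using beta_neg by simp
  have "(\<lambda>x. x powr (\<beta> - 1)) integrable_on {T..}"
    using has_integral_powr_to_inf[OF e T(1)] by blast
  from integrable_on_cmult_left[OF this, of C]
  have g: "(\<lambda>x. C * x powr (\<beta> - 1)) integrable_on {T..}" by simp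
  have "lam absolutely_integrable_on {T..}"
  proof (rule measurable_bounded_by_integrable_imp_absolutely_integrable[OF _ _ g])
    show "lam \<in> borel_measurable (lebesgue_on {T..})"
      by (rule continuous_imp_measurable_on_sets_lebesgue)
        (rule continuous_on_subset[OF lam_cont], use T in auto)
    show "{T..} \<in> sets lebesgue" by simp
    show "norm (lam x) \<le> C * x powr (\<beta> - 1)" if "x \<in> {T..}" for x
      using T(3)[of x] lam_nonneg[of x] that T(1) by auto
  qed
  hence "lam integrable_on {T..}" using absolutely_integrable_on_def by blast
  moreover have "lam integrable_on {0..T}" by (rule lam_int_Icc) simp
  moreover have "negligible ({0..T} \<inter> {T..})"
  proof -
    have "{0..T} \<inter> {T..} = {T}" using T by auto
    thus ?thesis by simp
  qed
  moreover have "{0..} = {0..T} \<union> {T..}" using T by auto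
  ultimately show ?thesis using integrable_Un by metis
qed

definition \<mu> where "\<mu> = integral {0..} lam"

lemma Lam_lim: "((\<lambda>y. integral {0..y} lam) \<longlongrightarrow> \<mu>) at_top"
proof -
  obtain T C where T12: "T > 0" "C \<ge> 0" and T3: "\<forall>t\<ge>T. lam t \<le> C * t powr (\<beta> - 1)"
    using lam_power_bound by blast
  note T = T12 T3[rule_format]
  have e: "\<beta> - 1 < -1" using beta_neg by simp
  have tailb: "integral {y..} lam \<le> C * (- (y powr \<beta>) / \<beta>)" if y: "y \<ge> T" for y
  proof -
    have y0: "y > 0" using y T by simp
    have "((\<lambda>x. x powr (\<beta> - 1)) has_integral - (y powr (\<beta> - 1 + 1)) / (\<beta> - 1 + 1)) {y..}"
      by (rule has_integral_powr_to_inf[OF e y0])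
    from has_integral_mult_right[OF this, of C]
    have "((\<lambda>x. C * x powr (\<beta> - 1)) has_integral C * (- (y powr \<beta>) / \<beta>)) {y..}" by simp
    moreover have "lam integrable_on {y..}"
      by (rule nonneg_int_Ici[OF lam_int]) (use y T lam_nonneg in auto)
    ultimately show ?thesis
    proof (intro has_integral_le[OF integrable_integral])
      show "lam x \<le> C * x powr (\<beta> - 1)" if "x \<in> {y..}" for x using T(3)[of x] that y by simp
    qed
  qed
  have tail0: "integral {y..} lam \<ge> 0" if "y \<ge> 0" for y
    by (rule integral_nonneg[OF nonneg_int_Ici[OF lam_int]]) (use that lam_nonneg in auto)
  have lim0: "((\<lambda>y. C * (- (y powr \<beta>) / \<beta>)) \<longlongrightarrow> 0) at_top"
  proof -
    have "((\<lambda>y. y powr \<beta>) \<longlongrightarrow> 0) at_top"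
      by (rule tendsto_neg_powr[OF beta_neg filterlim_ident])
    hence "((\<lambda>y. C * (- (y powr \<beta>) / \<beta>)) \<longlongrightarrow> C * (- 0 / \<beta>)) at_top"
      by (intro tendsto_intros) (use beta_neg in auto)
    thus ?thesis by simp
  qed
  have "((\<lambda>y. integral {y..} lam) \<longlongrightarrow> 0) at_top"
  proof (rule tendsto_sandwich[OF _ _ tendsto_const lim0])
    show "\<forall>\<^sub>F n in at_top. 0 \<le> integral {n..} lam"
      using tail0 by (auto simp: eventually_at_top_linorder intro: exI[of _ 0])
    show "\<forall>\<^sub>F n in at_top. integral {n..} lam \<le> C * (- (n powr \<beta>) / \<beta>)"
      using tailb by (auto simp: eventually_at_top_linorder)
  qed
  hence "((\<lambda>y. \<mu> - integral {y..} lam) \<longlongrightarrow> \<mu> - 0) at_top"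
    by (intro tendsto_intros)
  moreover have "\<forall>\<^sub>F y in at_top. \<mu> - integral {y..} lam = integral {0..y} lam"
  proof (rule eventually_at_top_linorderI[of 0])
    fix y :: real assume "y \<ge> 0"
    thus "\<mu> - integral {y..} lam = integral {0..y} lam"
    proof -
      have "integral {0..} lam = integral {0..y} lam + integral {y..} lam"
        by (rule split_Ici[OF lam_int]) (use \<open>y \<ge> 0\<close> lam_nonneg lam_int_Icc in auto)
      thus ?thesis unfolding \<mu>_def by simp
    qed
  qed
  ultimately show ?thesis by (simp add: tendsto_cong)
qed

lemma tlam_lim: "((\<lambda>t. t * lam t) \<longlongrightarrow> 0) at_top"
proof -
  obtain T C where T12: "T > 0" "C \<ge> 0" and T3: "\<forall>t\<ge>T. lam t \<le> C * t powr (\<beta> - 1)"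
    using lam_power_bound by blast
  note T = T12 T3[rule_format]
  have "((\<lambda>y. y powr \<beta>) \<longlongrightarrow> 0) at_top"
    by (rule tendsto_neg_powr[OF beta_neg filterlim_ident])
  hence lim0: "((\<lambda>y. C * y powr \<beta>) \<longlongrightarrow> 0) at_top"
    using tendsto_mult_right_zero by blast
  show ?thesis
  proof (rule tendsto_sandwich[OF _ _ tendsto_const lim0])
    show "\<forall>\<^sub>F n in at_top. 0 \<le> n * lam n"
      using lam_nonneg by (auto simp: eventually_at_top_linorder intro: exI[of _ 0])
    show "\<forall>\<^sub>F n in at_top. n * lam n \<le> C * n powr \<beta>"
    proof (rule eventually_at_top_linorderI[of T])
      fix n assume n: "n \<ge> T"
      hence "n * lam n \<le> n * (C * n powr (\<beta> - 1))" using T by (intro mult_left_mono) auto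
      also have "\<dots> = C * n powr \<beta>" using n T by (simp add: powr_diff field_simps)
      finally show "n * lam n \<le> C * n powr \<beta>" .
    qed
  qed
qed

lemma ibp: assumes "y \<ge> 0"
  shows "((\<lambda>s. s * k s) has_integral (integral {0..y} lam - y * lam y)) {0..y}"
proof -
  have "((\<lambda>s. s * k s) has_integral ((\<lambda>s. integral {0..s} lam - s * lam s) y - (\<lambda>s. integral {0..s} lam - s * lam s) 0)) {0..y}"
  proof (rule fundamental_theorem_of_calculus[OF assms])
    fix x assume x: "x \<in> {0..y}"
    have d1: "((\<lambda>s. integral {0..s} lam) has_real_derivative lam x) (at x within {0..y})"
      by (rule integral_has_real_derivative[OF continuous_on_subset[OF lam_cont] x]) auto
    have d2: "(lam has_real_derivative - k x) (at x within {0..y})"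
      by (rule has_field_derivative_subset[OF lam_deriv]) (use x in auto)
    have d3: "((\<lambda>s. s * lam s) has_real_derivative (1 * lam x + x * (- k x))) (at x within {0..y})"
      using DERIV_mult'[OF DERIV_ident d2] by simp
    have "((\<lambda>s. integral {0..s} lam - s * lam s) has_real_derivative (lam x - (1 * lam x + x * (- k x)))) (at x within {0..y})"
      by (rule DERIV_diff[OF d1 d3])
    thus "((\<lambda>s. integral {0..s} lam - s * lam s) has_vector_derivative x * k x) (at x within {0..y})"
      by (simp add: has_real_derivative_iff_has_vector_derivative[symmetric])
  qed
  thus ?thesis by simp
qed

lemma sk_has_integral: "((\<lambda>s. s * k s) has_integral \<mu>) {0..}"
proof (rule has_integral_to_inf)
  show "(\<lambda>s. s * k s) integrable_on {0..y}" for y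
    by (rule integrable_continuous_interval)
      (auto intro!: continuous_intros continuous_on_subset[OF k_cont])
  show "y \<ge> 0 \<Longrightarrow> y * k y \<ge> 0" for y using k_pos[of y] by simp
  have "((\<lambda>y. integral {0..y} lam - y * lam y) \<longlongrightarrow> \<mu> - 0) at_top"
    by (intro tendsto_intros Lam_lim tlam_lim)
  moreover have "\<forall>\<^sub>F y in at_top. integral {0..y} lam - y * lam y = integral {0..y} (\<lambda>s. s * k s)"
  proof (rule eventually_at_top_linorderI[of 0])
    fix y :: real assume "y \<ge> 0"
    from integral_unique[OF ibp[OF this]] show "integral {0..y} lam - y * lam y = integral {0..y} (\<lambda>s. s * k s)" by simp
  qed
  ultimately show "((\<lambda>y. integral {0..y} (\<lambda>s. s * k s)) \<longlongrightarrow> \<mu>) at_top"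
    by (simp add: tendsto_cong)
qed

end



locale rset = kset +
  fixes r :: "real \<Rightarrow> real"
  assumes r_cont: "continuous_on {0..} r"
    and r0: "r 0 = 1"
    and r_deriv: "\<And>t. t \<ge> 0 \<Longrightarrow> (r has_real_derivative
                 (- K * r t + integral {0..t} (\<lambda>s. k (t - s) * r s))) (at t within {0..})"
begin

definition Cv where "Cv t = integral {0..t} (\<lambda>s. k (t - s) * r s)"
definition R where "R x = integral {0..x} r"
definition Kc where "Kc x = integral {0..x} k"

lemma r_int_Icc: "a \<ge> 0 \<Longrightarrow> r integrable_on {a..b}"
  by (rule integrable_continuous_interval) (rule continuous_on_subset[OF r_cont], auto)

lemma Kc_deriv: "x \<ge> 0 \<Longrightarrow> (Kc has_real_derivative k x) (at x within {0..})"
proof -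
  assume x: "x \<ge> 0"
  have "(Kc has_real_derivative k x) (at x within {0..x+1})"
    unfolding Kc_def
    by (rule integral_has_real_derivative) (auto intro: continuous_on_subset[OF k_cont] simp: x)
  thus ?thesis by (subst at_within_nhd[where S="{..<x+1}"]) auto
qed

lemma R_deriv: "x \<ge> 0 \<Longrightarrow> (R has_real_derivative r x) (at x within {0..})"
proof -
  assume x: "x \<ge> 0"
  have "(R has_real_derivative r x) (at x within {0..x+1})"
    unfolding R_def
    by (rule integral_has_real_derivative) (auto intro: continuous_on_subset[OF r_cont] simp: x)
  thus ?thesis by (subst at_within_nhd[where S="{..<x+1}"]) auto
qed

lemma Kc_cont: "continuous_on {0..} Kc"
  unfolding continuous_on_eq_continuous_within
  using Kc_deriv DERIV_continuous by (metis atLeast_iff)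

lemma R_cont: "continuous_on {0..} R"
  unfolding continuous_on_eq_continuous_within
  using R_deriv DERIV_continuous by (metis atLeast_iff)

lemma cont_flip: fixes f :: "real \<Rightarrow> real" and t :: real assumes "continuous_on {0..} f" shows "continuous_on {0..t} (\<lambda>s. f (t - s))"
proof -
  have c: "continuous_on {0..t} (\<lambda>s. t - s)" by (rule continuous_on_diff[OF continuous_on_const continuous_on_id])
  show ?thesis by (rule continuous_on_compose2[OF assms c]) auto
qed

lemma ibpJ: assumes t: "t \<ge> 0"
  shows "integral {0..t} (\<lambda>s. Kc (t - s) * r s) = integral {0..t} (\<lambda>s. k (t - s) * R s)"
proof -
  define f where "f s = Kc (t - s) * R s" for s
  have "((\<lambda>s. Kc (t - s) * r s - k (t - s) * R s) has_integral (f t - f 0)) {0..t}"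
  proof (rule fundamental_theorem_of_calculus[OF t])
    fix x assume x: "x \<in> {0..t}"
    have g: "((\<lambda>s. t - s) has_real_derivative -1) (at x within {0..t})"
      by (auto intro!: derivative_eq_intros)
    have "(Kc has_real_derivative k (t - x)) (at (t - x) within ((\<lambda>s. t - s) ` {0..t}))"
      by (rule has_field_derivative_subset[OF Kc_deriv]) (use x in auto)
    from DERIV_image_chain[OF this g]
    have d1: "((\<lambda>s. Kc (t - s)) has_real_derivative k (t - x) * -1) (at x within {0..t})"
      by (simp add: o_def)
    have d2: "(R has_real_derivative r x) (at x within {0..t})"
      by (rule has_field_derivative_subset[OF R_deriv]) (use x in auto)
    have "(f has_real_derivative (Kc (t - x) * r x + k (t - x) * -1 * R x)) (at x within {0..t})"
      unfolding f_def by (rule DERIV_mult'[OF d1 d2])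
    thus "(f has_vector_derivative (Kc (t - x) * r x - k (t - x) * R x)) (at x within {0..t})"
      by (simp add: has_real_derivative_iff_has_vector_derivative[symmetric])
  qed
  moreover have "f t - f 0 = 0" by (simp add: f_def Kc_def R_def)
  ultimately have "integral {0..t} (\<lambda>s. Kc (t - s) * r s - k (t - s) * R s) = 0"
    by (simp add: integral_unique)
  moreover have "(\<lambda>s. Kc (t - s) * r s) integrable_on {0..t}"
    by (rule integrable_continuous_interval)
      (intro continuous_intros cont_flip[OF Kc_cont] continuous_on_subset[OF r_cont], auto)
  moreover have "(\<lambda>s. k (t - s) * R s) integrable_on {0..t}"
    by (rule integrable_continuous_interval)
      (intro continuous_intros cont_flip[OF k_cont] continuous_on_subset[OF R_cont], auto)
  ultimately show ?thesis by (simp add: integral_diff)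
qed

end



context rset begin

lemma J2_deriv:
  assumes B: "B > 0" and t: "t \<in> {0..B}"
  shows "((\<lambda>\<tau>. integral {0..\<tau>} (\<lambda>v. k v * R (\<tau> - v))) has_real_derivative
           integral {0..t} (\<lambda>v. k v * r (t - v))) (at t within {0..B})"
proof -
  define rl where "rl z = r (max 0 z)" for z
  define a where "a = -(B+1)"
  define Rl where "Rl z = integral {a..z} rl - integral {a..0} rl" for z
  have rl_cont: "continuous_on UNIV rl"
  proof -
    have "continuous_on UNIV (\<lambda>z::real. max 0 z)" by (intro continuous_intros)
    moreover have "(\<lambda>z::real. max 0 z) ` UNIV \<subseteq> {0..}" by auto
    ultimately have "continuous_on UNIV (\<lambda>z. r (max 0 z))" by (rule continuous_on_compose2[OF r_cont])
    thus ?thesis unfolding rl_def by simp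
  qed
  have rl_int: "rl integrable_on {c..d}" for c d
    by (rule integrable_continuous_interval) (rule continuous_on_subset[OF rl_cont], auto)
  have Rl_deriv: "(Rl has_real_derivative rl z) (at z)" if z: "z > a" for z
  proof -
    have "((\<lambda>x. integral {a..x} rl) has_real_derivative rl z) (at z within {a..z+1})"
      by (rule integral_has_real_derivative) (auto intro: continuous_on_subset[OF rl_cont] simp: z less_imp_le)
    hence "((\<lambda>x. integral {a..x} rl) has_real_derivative rl z) (at z)"
      using at_within_Icc_at[of a z "z+1"] z by simp
    hence "((\<lambda>x. integral {a..x} rl - integral {a..0} rl) has_real_derivative rl z - 0) (at z)"
      by (intro DERIV_diff DERIV_const)
    thus ?thesis unfolding Rl_def by simp
  qed
  have Rl_cont: "continuous_on {-B..} Rl"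
    by (rule continuous_at_imp_continuous_on) (use Rl_deriv DERIV_isCont a_def in force)
  have Rl_eq: "Rl z = R z" if z: "z \<ge> 0" for z
  proof -
    have "integral {a..0} rl + integral {0..z} rl = integral {a..z} rl"
      by (rule Henstock_Kurzweil_Integration.integral_combine[OF _ z rl_int]) (use B in \<open>simp add: a_def\<close>)
    moreover have "integral {0..z} rl = integral {0..z} r"
      by (rule integral_cong) (simp add: rl_def)
    ultimately show ?thesis unfolding Rl_def R_def by simp
  qed
  have Rl0: "Rl 0 = 0" unfolding Rl_def by simp
  define G where "G \<tau> x = integral {0..x} (\<lambda>v. k v * Rl (\<tau> - v))" for \<tau> x
  define X where "X = {0..B}"
  have kRl_cont: "continuous_on {0..B} (\<lambda>v. k v * Rl (\<tau> - v))" if "\<tau> \<in> X" for \<tau>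
  proof (intro continuous_intros continuous_on_subset[OF k_cont])
    have c: "continuous_on {0..B} (\<lambda>v. \<tau> - v)" by (intro continuous_intros)
    show "continuous_on {0..B} (\<lambda>v. Rl (\<tau> - v))"
      by (rule continuous_on_compose2[OF Rl_cont c]) (use that in \<open>auto simp: X_def\<close>)
  qed auto
  have fx: "((\<lambda>\<tau>. G \<tau> x) has_field_derivative integral {0..x} (\<lambda>v. k v * rl (\<tau>0 - v)))
              (at \<tau>0 within X)" if x: "x \<in> {0..B}" and \<tau>0: "\<tau>0 \<in> X" for x \<tau>0
  proof -
    have "((\<lambda>\<tau>. integral (cbox 0 x) (\<lambda>v. k v * Rl (\<tau> - v))) has_field_derivative
            integral (cbox 0 x) (\<lambda>v. k v * rl (\<tau>0 - v))) (at \<tau>0 within X)"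
    proof (rule leibniz_rule_field_derivative)
      fix \<tau> v assume \<tau>: "\<tau> \<in> X" and v: "v \<in> cbox 0 x"
      have "\<tau> - v > a" using \<tau> v x by (auto simp: X_def a_def cbox_interval)
      have "((\<lambda>\<tau>. Rl (\<tau> - v)) has_field_derivative rl (\<tau> - v) * 1) (at \<tau> within X)"
        by (rule DERIV_chain2[where g="\<lambda>\<tau>. \<tau> - v", OF Rl_deriv[OF \<open>\<tau> - v > a\<close>]]) (auto intro!: derivative_eq_intros)
      from DERIV_cmult[OF this, of "k v"]
      show "((\<lambda>\<tau>. k v * Rl (\<tau> - v)) has_field_derivative k v * rl (\<tau> - v)) (at \<tau> within X)"
        by simp
    next
      fix \<tau> assume "\<tau> \<in> X"
      show "(\<lambda>v. k v * Rl (\<tau> - v)) integrable_on cbox 0 x"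
        unfolding cbox_interval
        by (rule integrable_continuous_interval, rule continuous_on_subset[OF kRl_cont[OF \<open>\<tau> \<in> X\<close>]])
          (use x in auto)
    next
      show "continuous_on (X \<times> cbox 0 x) (\<lambda>(\<tau>, v). k v * rl (\<tau> - v))"
      proof -
        have c1: "continuous_on (X \<times> cbox 0 x) (\<lambda>p. k (snd p))"
          by (rule continuous_on_compose2[OF k_cont continuous_on_snd]) (auto simp: cbox_interval)
        have c2: "continuous_on (X \<times> cbox 0 x) (\<lambda>p. rl (fst p - snd p))"
          by (rule continuous_on_compose2[OF rl_cont]) (auto intro!: continuous_intros)
        have "continuous_on (X \<times> cbox 0 x) (\<lambda>p. k (snd p) * rl (fst p - snd p))"
          by (rule continuous_on_mult[OF c1 c2])
        thus ?thesis by (simp add: case_prod_beta)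
      qed
    qed (use \<tau>0 in \<open>auto simp: X_def\<close>)
    thus ?thesis unfolding G_def cbox_interval by simp
  qed
  have fy: "((\<lambda>y. G \<tau> y) has_real_derivative k y * Rl (\<tau> - y)) (at y within X)"
    if "\<tau> \<in> X" "y \<in> X" for \<tau> y
    unfolding G_def X_def
    by (rule integral_has_real_derivative[OF kRl_cont[OF \<open>\<tau> \<in> X\<close>]]) (use that in \<open>auto simp: X_def\<close>)
  have fy_cont: "continuous_on (X \<times> X) (\<lambda>(\<tau>, y). blinfun_mult_right (k y * Rl (\<tau> - y)))"
  proof -
    have c1: "continuous_on (X \<times> X) (\<lambda>p. k (snd p))"
      by (rule continuous_on_compose2[OF k_cont continuous_on_snd]) (auto simp: X_def)
    have c2: "continuous_on (X \<times> X) (\<lambda>p. Rl (fst p - snd p))"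
      by (rule continuous_on_compose2[OF Rl_cont]) (auto intro!: continuous_intros simp: X_def)
    have "continuous_on (X \<times> X) (\<lambda>p. k (snd p) * Rl (fst p - snd p))"
      by (rule continuous_on_mult[OF c1 c2])
    from bounded_linear.continuous_on[OF bounded_linear_blinfun_mult_right this]
    show ?thesis by (simp add: case_prod_beta)
  qed
  define D where "D = integral {0..t} (\<lambda>v. k v * rl (t - v))"
  have tX: "t \<in> X" using t by (simp add: X_def)
  have part: "((\<lambda>(x, y). G x y) has_derivative (\<lambda>(tx, ty). (*) D tx + blinfun_mult_right (k t * Rl (t - t)) ty))
      (at (t, t) within X \<times> X)"
  proof (rule has_derivative_partialsI[where fx="(*) D" and fy="\<lambda>x y. blinfun_mult_right (k y * Rl (x - y))"])
    show "((\<lambda>x. G x t) has_derivative (*) D) (at t within X)"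
      using fx[OF t tX] unfolding D_def has_field_derivative_def by simp
    show "((\<lambda>y. G x y) has_derivative blinfun_apply (blinfun_mult_right (k y * Rl (x - y)))) (at y within X)"
      if "x \<in> X" "y \<in> X" for x y
      using fy[OF that] unfolding has_field_derivative_eq_has_derivative_blinfun by simp
    show "continuous (at (t, t) within X \<times> X) (\<lambda>(x, y). blinfun_mult_right (k y * Rl (x - y)))"
      using fy_cont tX by (simp add: continuous_on_eq_continuous_within)
  qed (use tX in \<open>auto simp: X_def\<close>)
  have diag: "((\<lambda>s. (s, s)) has_derivative (\<lambda>h. (h, h))) (at t within X)"
    by (intro derivative_eq_intros) auto
  have part': "((\<lambda>(x, y). G x y) has_derivative (\<lambda>(tx, ty). (*) D tx + blinfun_mult_right (k t * Rl (t - t)) ty))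
      (at (t, t) within (\<lambda>s. (s, s)) ` X)"
    by (rule has_derivative_subset[OF part]) auto
  have "((\<lambda>s. (\<lambda>(x, y). G x y) (s, s)) has_derivative
      (\<lambda>h. (\<lambda>(tx, ty). (*) D tx + blinfun_mult_right (k t * Rl (t - t)) ty) (h, h))) (at t within X)"
    by (rule has_derivative_in_compose[OF diag]) (use part' in simp)
  hence "((\<lambda>s. G s s) has_derivative (*) D) (at t within X)"
    by (simp add: Rl0)
  hence d: "((\<lambda>s. G s s) has_real_derivative D) (at t within X)"
    by (simp add: has_field_derivative_def)
  have eqG: "G s s = integral {0..s} (\<lambda>v. k v * R (s - v))" if "s \<in> X" for s
    unfolding G_def by (rule integral_cong) (simp add: Rl_eq)
  have "((\<lambda>\<tau>. integral {0..\<tau>} (\<lambda>v. k v * R (\<tau> - v))) has_real_derivative D) (at t within X)"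
    by (rule has_field_derivative_transform_within[OF d zero_less_one tX]) (simp add: eqG)
  moreover have "D = integral {0..t} (\<lambda>v. k v * r (t - v))"
    unfolding D_def by (rule integral_cong) (simp add: rl_def)
  ultimately show ?thesis by (simp add: X_def)
qed

end



context rset begin

lemma Cv_flip: "Cv t = integral {0..t} (\<lambda>v. k v * r (t - v))"
  unfolding Cv_def using integral_flip[of t "\<lambda>v. k v * r (t - v)"] by simp

lemma P_eq: assumes t: "t \<ge> 0"
  shows "integral {0..t} (\<lambda>s. lam (t - s) * r s) = K * R t - integral {0..t} (\<lambda>v. k v * R (t - v))"
proof -
  have "integral {0..t} (\<lambda>s. lam (t - s) * r s) = integral {0..t} (\<lambda>s. K * r s - Kc (t - s) * r s)"
  proof (rule integral_cong)
    fix s assume "s \<in> {0..t}"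
    hence "K = integral {0..t - s} k + lam (t - s)" by (intro K_split) auto
    thus "lam (t - s) * r s = K * r s - Kc (t - s) * r s" by (simp add: Kc_def algebra_simps)
  qed
  also have "\<dots> = integral {0..t} (\<lambda>s. K * r s) - integral {0..t} (\<lambda>s. Kc (t - s) * r s)"
  proof (rule integral_diff)
    show "(\<lambda>s. K * r s) integrable_on {0..t}" using r_int_Icc[of 0 t] integrable_on_cmult_left[of r _ K] by simp
    show "(\<lambda>s. Kc (t - s) * r s) integrable_on {0..t}"
      by (rule integrable_continuous_interval)
        (intro continuous_intros cont_flip[OF Kc_cont] continuous_on_subset[OF r_cont], auto)
  qed
  also have "integral {0..t} (\<lambda>s. K * r s) = K * R t" unfolding R_def by simp
  also have "integral {0..t} (\<lambda>s. Kc (t - s) * r s) = integral {0..t} (\<lambda>s. k (t - s) * R s)"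
    by (rule ibpJ[OF t])
  also have "\<dots> = integral {0..t} (\<lambda>v. k v * R (t - v))"
    using integral_flip[of t "\<lambda>v. k v * R (t - v)"] by simp
  finally show ?thesis .
qed

lemma phi_one: assumes t: "t \<ge> 0"
  shows "r t + integral {0..t} (\<lambda>s. lam (t - s) * r s) = 1"
proof -
  define B where "B = t + 1"
  have B: "B > 0" "t \<in> {0..B}" using t by (auto simp: B_def)
  define \<Phi> where "\<Phi> x = r x + (K * R x - integral {0..x} (\<lambda>v. k v * R (x - v)))" for x
  have "(\<Phi> has_real_derivative 0) (at x within {0..B})" if x: "x \<in> {0..B}" for x
  proof -
    have d1: "(r has_real_derivative (- K * r x + Cv x)) (at x within {0..B})"
      using has_field_derivative_subset[OF r_deriv[of x], of "{0..B}"] x by (auto simp: Cv_def)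
    have d2: "(R has_real_derivative r x) (at x within {0..B})"
      by (rule has_field_derivative_subset[OF R_deriv]) (use x in auto)
    note d3 = J2_deriv[OF B(1) x]
    have "(\<Phi> has_real_derivative (- K * r x + Cv x) + (K * r x - integral {0..x} (\<lambda>v. k v * r (x - v))))
            (at x within {0..B})"
      unfolding \<Phi>_def by (intro DERIV_add DERIV_diff DERIV_cmult d1 d2 d3)
    thus ?thesis by (simp add: Cv_flip)
  qed
  then obtain c where c: "\<forall>x\<in>{0..B}. \<Phi> x = c"
    using has_field_derivative_zero_constant[of "{0..B}" \<Phi>] by auto
  have "\<Phi> 0 = 1" by (simp add: \<Phi>_def R_def r0)
  hence "\<Phi> t = 1" using c B by auto
  thus ?thesis using P_eq[OF t] by (simp add: \<Phi>_def)
qed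

lemma phi_lag: assumes t: "t \<ge> 0"
  shows "r t + integral {0..t} (\<lambda>v. lam v * r (t - v)) = 1"
  using phi_one[OF t] integral_flip[of t "\<lambda>v. lam v * r (t - v)"] by simp

end



lemma eps_le:
  fixes a b C :: real
  assumes "\<And>\<delta>. \<delta> > 0 \<Longrightarrow> a \<le> b + C * \<delta>" "C \<ge> 0"
  shows "a \<le> b"
proof (rule ccontr)
  assume "\<not> a \<le> b"
  define \<delta> where "\<delta> = (a - b) / (2 * (C + 1))"
  have "\<delta> > 0" using \<open>\<not> a \<le> b\<close> assms(2) by (simp add: \<delta>_def)
  have "C * \<delta> < a - b"
  proof -
    have "C * \<delta> = (a - b) * (C / (2 * (C + 1)))" by (simp add: \<delta>_def field_simps)
    also have "\<dots> < (a - b) * 1"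
      using \<open>\<not> a \<le> b\<close> assms(2) by (intro mult_strict_left_mono) (auto simp: field_simps)
    finally show ?thesis by simp
  qed
  with assms(1)[OF \<open>\<delta> > 0\<close>] show False by simp
qed

lemma limsup_exists:
  fixes f :: "real \<Rightarrow> real"
  assumes B: "\<And>t. t \<ge> 0 \<Longrightarrow> \<bar>f t\<bar> \<le> B"
  shows "\<exists>M. (\<forall>\<delta>>0. \<exists>T0\<ge>0. \<forall>t\<ge>T0. f t \<le> M + \<delta>) \<and> (\<forall>\<delta>>0. \<forall>T. \<exists>t\<ge>T. f t > M - \<delta>)"
proof -
  define U where "U T = Sup (f ` {max 0 T..})" for T
  have bdd: "bdd_above (f ` {max 0 T..})" for T
    using B by (auto intro!: bdd_aboveI[of _ B] simp: abs_le_iff)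
  have fU: "f t \<le> U T" if "t \<ge> max 0 T" for t T
    unfolding U_def by (rule cSup_upper[OF _ bdd]) (use that in auto)
  have Ulow: "U T \<ge> -B" for T
  proof -
    have "f (max 0 T) \<le> U T" by (rule fU) simp
    moreover have "\<bar>f (max 0 T)\<bar> \<le> B" by (rule B) simp
    ultimately show ?thesis by linarith
  qed
  have bddU: "bdd_below (range U)" using Ulow by (auto intro!: bdd_belowI[of _ "-B"])
  define M where "M = Inf (range U)"
  have P1: "\<exists>T0\<ge>0. \<forall>t\<ge>T0. f t \<le> M + \<delta>" if "\<delta> > 0" for \<delta>
  proof -
    have "Inf (range U) < M + \<delta>" using that by (simp add: M_def)
    then obtain T where "U T < M + \<delta>" using cInf_lessD[of "range U"] by auto
    hence "\<forall>t\<ge>max 0 T. f t \<le> M + \<delta>" using fU[where T=T] by force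
    thus ?thesis by (intro exI[of _ "max 0 T"]) auto
  qed
  have P2: "\<exists>t\<ge>T. f t > M - \<delta>" if "\<delta> > 0" for \<delta> T
  proof -
    have "M \<le> U T" unfolding M_def by (rule cInf_lower[OF _ bddU]) auto
    hence "M - \<delta> < Sup (f ` {max 0 T..})" using that by (simp add: U_def)
    then obtain y where "y \<in> f ` {max 0 T..}" "M - \<delta> < y"
      using less_cSupD[of "f ` {max 0 T..}"] by auto
    thus ?thesis by auto
  qed
  show ?thesis using P1 P2 by blast
qed

lemma near_max:
  fixes f D :: "real \<Rightarrow> real"
  assumes deriv: "\<And>t. t \<ge> 0 \<Longrightarrow> (f has_real_derivative D t) (at t within {0..})"
    and T0: "T0 \<ge> 0" and up: "\<And>t. t \<ge> T0 \<Longrightarrow> f t \<le> M + \<delta>" and \<delta>: "\<delta> > 0"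
    and freq: "\<And>T. \<exists>t\<ge>T. f t > M - \<delta>/2"
  shows "\<exists>t\<ge>T. f t > M - \<delta>/2 \<and> D t \<ge> -2*\<delta>"
proof -
  obtain t0 where t0: "t0 \<ge> max T T0 + 1" "f t0 > M - \<delta>/2" using freq by blast
  define \<psi> where "\<psi> s = f s + 2 * \<delta> * s" for s
  have fcont: "continuous_on {0..} f"
    unfolding continuous_on_eq_continuous_within
    using deriv DERIV_continuous by (metis atLeast_iff)
  have "continuous_on {t0-1..t0} \<psi>"
    unfolding \<psi>_def using T0 t0
    by (intro continuous_intros continuous_on_subset[OF fcont]) auto
  then obtain x where x: "x \<in> {t0-1..t0}" and xmax: "\<And>y. y \<in> {t0-1..t0} \<Longrightarrow> \<psi> y \<le> \<psi> x"
    using continuous_attains_sup[of "{t0-1..t0}" \<psi>] t0 by auto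
  have "f (t0 - 1) \<le> M + \<delta>" using t0 by (intro up) auto
  hence "\<psi> (t0 - 1) < \<psi> t0"
    using t0 T0 \<delta> by (simp add: \<psi>_def algebra_simps)
  hence "x \<noteq> t0 - 1" using xmax[of t0] t0 by auto
  hence x1: "x > t0 - 1" using x by auto
  have fx: "f x > M - \<delta>/2"
  proof -
    have "\<psi> t0 \<le> \<psi> x" using xmax[of t0] t0 by auto
    hence "f t0 \<le> f x + 2*\<delta>*(x - t0)" by (simp add: \<psi>_def algebra_simps)
    moreover have "2*\<delta>*(x - t0) \<le> 0" using x \<delta> by (simp add: mult_nonneg_nonpos)
    ultimately show ?thesis using t0 by linarith
  qed
  have Dx: "D x \<ge> -2*\<delta>"
  proof (rule ccontr)
    assume "\<not> D x \<ge> -2*\<delta>"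
    hence neg: "D x + 2*\<delta> < 0" by simp
    have x0: "x \<ge> 0" using x1 t0 T0 by auto
    have "(\<psi> has_real_derivative D x + 2*\<delta>*1) (at x within {0..})"
      unfolding \<psi>_def by (intro DERIV_add deriv[OF x0] DERIV_cmult DERIV_ident)
    from has_real_derivative_neg_dec_left[OF this] neg
    obtain d where d: "d > 0" "\<And>h. h > 0 \<Longrightarrow> x - h \<in> {0..} \<Longrightarrow> h < d \<Longrightarrow> \<psi> x < \<psi> (x - h)"
      by auto
    define mm where "mm = min d (x - (t0 - 1))"
    define h where "h = mm / 2"
    have m: "mm > 0" "mm \<le> d" "mm \<le> x - (t0 - 1)"
      using d x1 by (auto simp: mm_def)
    have h1: "h > 0" using m by (simp add: h_def)
    have h2: "h < d" using m unfolding h_def by linarith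
    have h3: "x - h \<in> {t0-1..t0}" using m x unfolding h_def atLeastAtMost_iff by (intro conjI; linarith)
    have h4: "x - h \<in> {0..}" using h3 t0 T0 by auto
    note h = h1 h2 h3 h4
    from d(2)[OF h(1) h(4) h(2)] xmax[OF h(3)] show False by simp
  qed
  show ?thesis using fx Dx x1 t0 by (intro exI[of _ x]) auto
qed

context rset begin

lemma r_pos: "t \<ge> 0 \<Longrightarrow> r t > 0"
proof (rule ccontr)
  assume t: "t \<ge> 0" and nt: "\<not> r t > 0"
  define Z where "Z = {0..} \<inter> r -` {..0}"
  have Zc: "closed Z" unfolding Z_def by (rule continuous_closed_preimage[OF r_cont]) auto
  have Zne: "Z \<noteq> {}" using t nt by (auto simp: Z_def)
  have Zb: "bdd_below Z" by (auto simp: Z_def intro!: bdd_belowI[of _ 0])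
  define t1 where "t1 = Inf Z"
  have t1Z: "t1 \<in> Z" unfolding t1_def by (rule closed_contains_Inf[OF Zne Zb Zc])
  have t1_0: "t1 \<ge> 0" "r t1 \<le> 0" using t1Z by (auto simp: Z_def)
  have below: "r s > 0" if "0 \<le> s" "s < t1" for s
  proof (rule ccontr)
    assume "\<not> r s > 0"
    hence "s \<in> Z" using that by (auto simp: Z_def)
    hence "t1 \<le> s" unfolding t1_def by (rule cInf_lower[OF _ Zb])
    thus False using that by simp
  qed
  have t1pos: "t1 > 0" using t1_0 r0 by (cases "t1 = 0") auto
  have rt1: "r t1 = 0"
  proof (rule ccontr)
    assume "r t1 \<noteq> 0"
    hence "r t1 < 0" using t1_0 by simp
    have "continuous_on {0..t1} r" by (rule continuous_on_subset[OF r_cont]) auto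
    from IVT2'[of r t1 0 0, OF _ _ _ this] \<open>r t1 < 0\<close> r0 t1_0
    obtain s where s: "0 \<le> s" "s \<le> t1" "r s = 0" by auto
    have "s \<noteq> t1" using s \<open>r t1 < 0\<close> by auto
    with below[of s] s show False by simp
  qed
  have Cpos: "Cv t1 > 0"
  proof -
    have cont: "continuous_on {0..t1} (\<lambda>s. k (t1 - s) * r s)"
      by (intro continuous_intros cont_flip[OF k_cont] continuous_on_subset[OF r_cont]) auto
    have nn: "k (t1 - s) * r s \<ge> 0" if "s \<in> {0..t1}" for s
    proof -
      have "r s \<ge> 0" using below[of s] that rt1 by (cases "s = t1") auto
      moreover have "k (t1 - s) > 0" using that by (intro k_pos) auto
      ultimately show ?thesis by simp
    qed
    have "integral {0..t1} (\<lambda>s. k (t1 - s) * r s) \<noteq> 0"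
    proof
      assume "integral {0..t1} (\<lambda>s. k (t1 - s) * r s) = 0"
      hence "\<forall>s\<in>{0..t1}. k (t1 - s) * r s = 0"
        using integral_eq_0_iff[OF cont t1pos nn] by auto
      hence "k (t1 - 0) * r 0 = 0" using t1_0 by (intro bspec[of _ _ 0]) auto
      thus False using k_pos[of t1] t1_0 r0 by simp
    qed
    moreover have "integral {0..t1} (\<lambda>s. k (t1 - s) * r s) \<ge> 0"
      by (rule integral_nonneg[OF integrable_continuous_interval[OF cont] nn])
    ultimately show ?thesis unfolding Cv_def by linarith
  qed
  have "(r has_real_derivative (- K * r t1 + Cv t1)) (at t1 within {0..})"
    using r_deriv[OF t1_0(1)] by (simp add: Cv_def)
  moreover have "- K * r t1 + Cv t1 > 0" using rt1 Cpos by simp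
  ultimately obtain d where d: "d > 0" "\<And>h. h > 0 \<Longrightarrow> t1 - h \<in> {0..} \<Longrightarrow> h < d \<Longrightarrow> r (t1 - h) < r t1"
    using has_real_derivative_pos_inc_left by blast
  define h where "h = min d t1 / 2"
  have h: "h > 0" "h < d" "t1 - h \<in> {0..}" "t1 - h < t1" using d t1pos by (auto simp: h_def min_def)
  from d(2)[OF h(1) h(3) h(2)] below[of "t1 - h"] h rt1 show False by auto
qed

lemma r_le1: assumes t: "t \<ge> 0" shows "r t \<le> 1"
proof -
  have "integral {0..t} (\<lambda>s. lam (t - s) * r s) \<ge> 0"
  proof (rule integral_nonneg)
    show "(\<lambda>s. lam (t - s) * r s) integrable_on {0..t}"
      by (rule integrable_continuous_interval)
        (intro continuous_intros cont_flip[OF lam_cont] continuous_on_subset[OF r_cont], auto)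
    show "lam (t - s) * r s \<ge> 0" if "s \<in> {0..t}" for s
      using lam_nonneg[of "t - s"] r_pos[of s] that by auto
  qed
  thus ?thesis using phi_one[OF t] by linarith
qed

lemma deriv_rewrite: assumes t: "t \<ge> 0"
  shows "- K * r t + Cv t = - lam t * r t + integral {0..t} (\<lambda>v. k v * (r (t - v) - r t))"
proof -
  have i1: "(\<lambda>v. k v * r (t - v)) integrable_on {0..t}"
    by (rule integrable_continuous_interval)
      (intro continuous_intros continuous_on_subset[OF k_cont] cont_flip[OF r_cont], auto)
  have i2: "(\<lambda>v. r t * k v) integrable_on {0..t}"
    using integrable_on_cmult_left[OF k_int_Icc[of 0 t], of "r t"] by simp
  have "integral {0..t} (\<lambda>v. k v * (r (t - v) - r t)) = integral {0..t} (\<lambda>v. k v * r (t - v) - r t * k v)"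
    by (simp add: algebra_simps)
  also have "\<dots> = Cv t - r t * integral {0..t} k"
    using integral_diff[OF i1 i2] by (simp add: Cv_flip)
  finally show ?thesis using K_split[OF t] by (simp add: algebra_simps)
qed

end



context rset begin

lemma intc: fixes f :: "real \<Rightarrow> real" assumes "continuous_on {0..t} f" "0 \<le> a" "b \<le> t"
  shows "f integrable_on {a..b}"
  by (rule integrable_continuous_interval, rule continuous_on_subset[OF assms(1)]) (use assms in auto)

lemma int_k_le_lam: assumes "0 \<le> a" "a \<le> t" shows "integral {a..t} k \<le> lam a"
proof -
  have "integral {0..a} k + integral {a..t} k = integral {0..t} k"
    by (rule Henstock_Kurzweil_Integration.integral_combine) (use assms k_int_Icc in auto)
  moreover have "K = integral {0..a} k + lam a" by (rule K_split) (use assms in auto)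
  moreover have "K = integral {0..t} k + lam t" by (rule K_split) (use assms in auto)
  moreover have "lam t \<ge> 0" by (rule lam_nonneg) (use assms in auto)
  ultimately show ?thesis by linarith
qed

lemma core:
  assumes S: "S > 0" and c: "c > 0" "\<And>v. v \<in> {0..S} \<Longrightarrow> c \<le> k v"
    and T0: "T0 \<ge> 0" and t: "t \<ge> T0 + S"
    and Ec: "continuous_on {0..t} E"
    and Epos: "\<And>v. v \<in> {0..t - T0} \<Longrightarrow> E v \<ge> 0"
    and Eneg: "\<And>v. v \<in> {t - T0..t} \<Longrightarrow> E v \<ge> -1"
    and A: "integral {0..t} (\<lambda>v. k v * E v) \<le> A"
  shows "integral {0..S} (\<lambda>v. lam v * E v) \<le> K / c * (A + lam (t - T0))"
proof -
  define a where "a = t - T0"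
  have a: "S \<le> a" "a \<le> t" "0 \<le> S" using S T0 t by (auto simp: a_def)
  have kEc: "continuous_on {0..t} (\<lambda>v. k v * E v)"
    by (intro continuous_intros continuous_on_subset[OF k_cont] Ec) auto
  have I1: "integral {0..S} (\<lambda>v. k v * E v) + integral {S..t} (\<lambda>v. k v * E v) = integral {0..t} (\<lambda>v. k v * E v)"
    by (rule Henstock_Kurzweil_Integration.integral_combine) (use a in \<open>auto intro: intc[OF kEc]\<close>)
  have I2: "integral {S..a} (\<lambda>v. k v * E v) + integral {a..t} (\<lambda>v. k v * E v) = integral {S..t} (\<lambda>v. k v * E v)"
    by (rule Henstock_Kurzweil_Integration.integral_combine) (use a in \<open>auto intro: intc[OF kEc]\<close>)
  have I3: "integral {S..a} (\<lambda>v. k v * E v) \<ge> 0"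
  proof (rule integral_nonneg)
    show "(\<lambda>v. k v * E v) integrable_on {S..a}" by (rule intc[OF kEc]) (use a in auto)
    show "0 \<le> k v * E v" if "v \<in> {S..a}" for v
      using Epos[of v] k_pos[of v] that a by (auto simp: a_def)
  qed
  have I4: "integral {a..t} (\<lambda>v. k v * E v) \<ge> integral {a..t} (\<lambda>v. - k v)"
  proof (rule integral_le)
    show "(\<lambda>v. - k v) integrable_on {a..t}" using k_int_Icc[of a t] a T0 integrable_neg by (force simp: a_def)
    show "(\<lambda>v. k v * E v) integrable_on {a..t}" by (rule intc[OF kEc]) (use a T0 in \<open>auto simp: a_def\<close>)
    show "- k v \<le> k v * E v" if "v \<in> {a..t}" for v
    proof -
      have "E v \<ge> -1" using Eneg[of v] that by (auto simp: a_def)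
      moreover have "k v > 0" using that a S by (intro k_pos) auto
      ultimately have "k v * (-1) \<le> k v * E v" by (intro mult_left_mono) auto
      thus ?thesis by simp
    qed
  qed
  have I5: "integral {a..t} k \<le> lam a" by (rule int_k_le_lam) (use a S in auto)
  have "integral {a..t} (\<lambda>v. - k v) = - integral {a..t} k" by (rule integral_neg)
  hence kS: "integral {0..S} (\<lambda>v. k v * E v) \<le> A + lam a" using I1 I2 I3 I4 I5 A by linarith
  have "integral {0..S} (\<lambda>v. lam v * E v) \<le> integral {0..S} (\<lambda>v. K / c * (k v * E v))"
  proof (rule integral_le)
    show "(\<lambda>v. lam v * E v) integrable_on {0..S}"
      by (rule intc[where t=t]) (intro continuous_intros continuous_on_subset[OF lam_cont] Ec, use a in auto)
    show "(\<lambda>v. K / c * (k v * E v)) integrable_on {0..S}"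
      using integrable_on_cmult_left[OF intc[OF kEc, of 0 S], of "K/c"] a by simp
    show "lam v * E v \<le> K / c * (k v * E v)" if v: "v \<in> {0..S}" for v
    proof -
      have E0: "E v \<ge> 0" using Epos[of v] v a by (auto simp: a_def)
      have "lam v \<le> K" using v by (intro lam_le_K) auto
      also have "K = K / c * c" using c by simp
      also have "\<dots> \<le> K / c * k v" using c(2)[OF v] K_nonneg c by (intro mult_left_mono) auto
      finally have "lam v * E v \<le> (K / c * k v) * E v" using E0 by (intro mult_right_mono) auto
      thus ?thesis by simp
    qed
  qed
  also have "\<dots> = K / c * integral {0..S} (\<lambda>v. k v * E v)" by simp
  also have "\<dots> \<le> K / c * (A + lam a)" using kS K_nonneg c by (intro mult_left_mono) auto
  finally show ?thesis by (simp add: a_def)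
qed

end



context rset begin

lemma lamI: "lam integrable_on {a..b}" if "a \<ge> 0"
  by (rule integrable_continuous_interval) (rule continuous_on_subset[OF lam_cont], use that in auto)

lemma Kc_le_K: "t \<ge> 0 \<Longrightarrow> integral {0..t} k \<le> K"
  using K_split lam_nonneg by force

lemma upper_step:
  assumes S: "S > 0" and c: "c > 0" "\<And>v. v \<in> {0..S} \<Longrightarrow> c \<le> k v"
    and \<delta>: "\<delta> > 0" and T0: "T0 \<ge> 0" and t: "t \<ge> T0 + S"
    and lamT: "lam (t - T0) \<le> \<delta>"
    and up: "\<And>u. u \<ge> T0 \<Longrightarrow> r u \<le> M + \<delta>"
    and rt: "r t > M - \<delta>/2"
    and Dt: "- K * r t + Cv t \<ge> -2*\<delta>"
  shows "(M - \<delta>/2) * (1 + integral {0..S} lam) \<le> 1 + K / c * (3 + 2*K) * \<delta>"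
proof -
  have t0: "t \<ge> 0" "S \<le> t" using t T0 S by auto
  define E where "E v = r t - r (t - v) + 2*\<delta>" for v
  have rflip: "continuous_on {0..t} (\<lambda>v. r (t - v))" by (rule cont_flip[OF r_cont])
  have Ec: "continuous_on {0..t} E" unfolding E_def by (intro continuous_intros rflip)
  define I where "I = integral {0..t} (\<lambda>v. k v * (r (t - v) - r t))"
  have Ieq: "- K * r t + Cv t = - lam t * r t + I" unfolding I_def by (rule deriv_rewrite[OF t0(1)])
  have lr: "lam t * r t \<ge> 0" using lam_nonneg[OF t0(1)] r_pos[OF t0(1)] by simp
  have iA: "(\<lambda>v. k v * (r (t - v) - r t)) integrable_on {0..t}"
    by (rule intc[where t=t]) (intro continuous_intros continuous_on_subset[OF k_cont] rflip, auto)
  have iB: "(\<lambda>v. (2*\<delta>) * k v) integrable_on {0..t}"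
    using integrable_on_cmult_left[OF k_int_Icc[of 0 t], of "2*\<delta>"] by simp
  have "integral {0..t} (\<lambda>v. k v * E v) = integral {0..t} (\<lambda>v. (2*\<delta>) * k v - k v * (r (t - v) - r t))"
    by (rule integral_cong) (simp add: E_def algebra_simps)
  also have "\<dots> = 2*\<delta> * integral {0..t} k - I"
    using integral_diff[OF iB iA] by (simp add: I_def)
  also have "\<dots> \<le> 2*\<delta> * K + 2*\<delta>"
  proof -
    have "2*\<delta> * integral {0..t} k \<le> 2*\<delta> * K" using Kc_le_K[OF t0(1)] \<delta> by simp
    moreover have "- I \<le> 2*\<delta>" using Ieq Dt lr by linarith
    ultimately show ?thesis by linarith
  qed
  finally have A: "integral {0..t} (\<lambda>v. k v * E v) \<le> 2*\<delta> * K + 2*\<delta>" .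
  have core': "integral {0..S} (\<lambda>v. lam v * E v) \<le> K / c * ((2*\<delta> * K + 2*\<delta>) + lam (t - T0))"
  proof (rule core[OF S c T0 t Ec _ _ A])
    show "E v \<ge> 0" if "v \<in> {0..t - T0}" for v
      using up[of "t - v"] rt that \<delta> by (auto simp: E_def)
    show "E v \<ge> -1" if "v \<in> {t - T0..t}" for v
      using r_le1[of "t - v"] r_pos[OF t0(1)] that \<delta> by (auto simp: E_def)
  qed
  have "K / c * ((2*\<delta> * K + 2*\<delta>) + lam (t - T0)) \<le> K / c * ((2*\<delta> * K + 2*\<delta>) + \<delta>)"
    using lamT K_nonneg c by (intro mult_left_mono) auto
  also have "\<dots> = K / c * (3 + 2*K) * \<delta>" by (simp add: algebra_simps)
  finally have LE: "integral {0..S} (\<lambda>v. lam v * E v) \<le> K / c * (3 + 2*K) * \<delta>" using core' by linarith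
  have lrc: "continuous_on {0..t} (\<lambda>v. lam v * r (t - v))"
    by (intro continuous_intros continuous_on_subset[OF lam_cont] rflip) auto
  have "integral {0..S} (\<lambda>v. lam v * r (t - v)) + integral {S..t} (\<lambda>v. lam v * r (t - v))
        = integral {0..t} (\<lambda>v. lam v * r (t - v))"
    by (rule Henstock_Kurzweil_Integration.integral_combine) (use t0 S in \<open>auto intro: intc[OF lrc]\<close>)
  moreover have "integral {S..t} (\<lambda>v. lam v * r (t - v)) \<ge> 0"
  proof (rule integral_nonneg)
    show "(\<lambda>v. lam v * r (t - v)) integrable_on {S..t}" by (rule intc[OF lrc]) (use S in auto)
    show "0 \<le> lam v * r (t - v)" if "v \<in> {S..t}" for v
      using lam_nonneg[of v] r_pos[of "t - v"] that S by auto
  qed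
  ultimately have "1 \<ge> r t + integral {0..S} (\<lambda>v. lam v * r (t - v))"
    using phi_lag[OF t0(1)] by linarith
  moreover have "integral {0..S} (\<lambda>v. lam v * r (t - v)) = (r t + 2*\<delta>) * integral {0..S} lam - integral {0..S} (\<lambda>v. lam v * E v)"
  proof -
    have i1: "(\<lambda>v. (r t + 2*\<delta>) * lam v) integrable_on {0..S}"
      using integrable_on_cmult_left[OF lamI[of 0 S, simplified], of "r t + 2*\<delta>"] by simp
    have i2: "(\<lambda>v. lam v * E v) integrable_on {0..S}"
      by (rule intc[where t=t]) (intro continuous_intros continuous_on_subset[OF lam_cont] Ec, use t0 in auto)
    have "integral {0..S} (\<lambda>v. lam v * r (t - v)) = integral {0..S} (\<lambda>v. (r t + 2*\<delta>) * lam v - lam v * E v)"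
      by (rule integral_cong) (simp add: E_def algebra_simps)
    also have "\<dots> = (r t + 2*\<delta>) * integral {0..S} lam - integral {0..S} (\<lambda>v. lam v * E v)"
      using integral_diff[OF i1 i2] by simp
    finally show ?thesis .
  qed
  moreover have "integral {0..S} lam \<ge> 0"
    by (rule integral_nonneg[OF lamI]) (auto intro: lam_nonneg)
  moreover have "2*\<delta> * integral {0..S} lam \<ge> 0" using \<delta> \<open>integral {0..S} lam \<ge> 0\<close> by simp
  moreover have "(r t + 2*\<delta>) * integral {0..S} lam = r t * integral {0..S} lam + 2*\<delta> * integral {0..S} lam"
    by (simp add: algebra_simps)
  moreover have "r t * (1 + integral {0..S} lam) = r t + r t * integral {0..S} lam" by (simp add: algebra_simps)
  ultimately have "r t * (1 + integral {0..S} lam) \<le> 1 + K / c * (3 + 2*K) * \<delta>"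
    using LE by linarith
  moreover have "(M - \<delta>/2) * (1 + integral {0..S} lam) \<le> r t * (1 + integral {0..S} lam)"
    using rt \<open>integral {0..S} lam \<ge> 0\<close> by (intro mult_right_mono) auto
  ultimately show ?thesis by linarith
qed

end



context rset begin

lemma lower_step:
  assumes S: "S > 0" and c: "c > 0" "\<And>v. v \<in> {0..S} \<Longrightarrow> c \<le> k v"
    and \<delta>: "\<delta> > 0" and T0: "T0 \<ge> 0" and t: "t \<ge> T0 + S"
    and lamT: "lam (t - T0) \<le> \<delta>"
    and low: "\<And>u. u \<ge> T0 \<Longrightarrow> r u \<ge> m - \<delta>"
    and rt: "r t < m + \<delta>/2"
    and Dt: "- K * r t + Cv t \<le> 2*\<delta>"
  shows "1 \<le> (m + \<delta>/2) * (1 + integral {0..S} lam) + K / c * (4 + 2*K) * \<delta>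
              + (integral {0..t} lam - integral {0..S} lam)"
proof -
  have t0: "t \<ge> 0" "S \<le> t" using t T0 S by auto
  define E where "E v = r (t - v) - r t + 2*\<delta>" for v
  have rflip: "continuous_on {0..t} (\<lambda>v. r (t - v))" by (rule cont_flip[OF r_cont])
  have Ec: "continuous_on {0..t} E" unfolding E_def by (intro continuous_intros rflip)
  define I where "I = integral {0..t} (\<lambda>v. k v * (r (t - v) - r t))"
  have Ieq: "- K * r t + Cv t = - lam t * r t + I" unfolding I_def by (rule deriv_rewrite[OF t0(1)])
  have "lam t \<le> lam (t - T0)" using t T0 S by (intro lam_mono) auto
  hence lamt: "lam t \<le> \<delta>" using lamT by linarith
  have lr: "lam t * r t \<le> \<delta>"
  proof -
    have "lam t * r t \<le> lam t * 1" using lam_nonneg[OF t0(1)] r_le1[OF t0(1)] by (intro mult_left_mono) auto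
    thus ?thesis using lamt by simp
  qed
  have iA: "(\<lambda>v. k v * (r (t - v) - r t)) integrable_on {0..t}"
    by (rule intc[where t=t]) (intro continuous_intros continuous_on_subset[OF k_cont] rflip, auto)
  have iB: "(\<lambda>v. (2*\<delta>) * k v) integrable_on {0..t}"
    using integrable_on_cmult_left[OF k_int_Icc[of 0 t], of "2*\<delta>"] by simp
  have "integral {0..t} (\<lambda>v. k v * E v) = integral {0..t} (\<lambda>v. k v * (r (t - v) - r t) + (2*\<delta>) * k v)"
    by (rule integral_cong) (simp add: E_def algebra_simps)
  also have "\<dots> = I + 2*\<delta> * integral {0..t} k"
    using integral_add[OF iA iB] by (simp add: I_def)
  also have "\<dots> \<le> 3*\<delta> + 2*\<delta> * K"
  proof -
    have "2*\<delta> * integral {0..t} k \<le> 2*\<delta> * K" using Kc_le_K[OF t0(1)] \<delta> by simp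
    moreover have "I \<le> 3*\<delta>" using Ieq Dt lr by linarith
    ultimately show ?thesis by linarith
  qed
  finally have A: "integral {0..t} (\<lambda>v. k v * E v) \<le> 3*\<delta> + 2*\<delta> * K" .
  have core': "integral {0..S} (\<lambda>v. lam v * E v) \<le> K / c * ((3*\<delta> + 2*\<delta> * K) + lam (t - T0))"
  proof (rule core[OF S c T0 t Ec _ _ A])
    show "E v \<ge> 0" if "v \<in> {0..t - T0}" for v
      using low[of "t - v"] rt that \<delta> by (auto simp: E_def)
    show "E v \<ge> -1" if "v \<in> {t - T0..t}" for v
      using r_pos[of "t - v"] r_le1[OF t0(1)] that \<delta> by (auto simp: E_def)
  qed
  have "K / c * ((3*\<delta> + 2*\<delta> * K) + lam (t - T0)) \<le> K / c * ((3*\<delta> + 2*\<delta> * K) + \<delta>)"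
    using lamT K_nonneg c by (intro mult_left_mono) auto
  also have "\<dots> = K / c * (4 + 2*K) * \<delta>" by (simp add: algebra_simps)
  finally have LE: "integral {0..S} (\<lambda>v. lam v * E v) \<le> K / c * (4 + 2*K) * \<delta>" using core' by linarith
  have lrc: "continuous_on {0..t} (\<lambda>v. lam v * r (t - v))"
    by (intro continuous_intros continuous_on_subset[OF lam_cont] rflip) auto
  have spl: "integral {0..S} (\<lambda>v. lam v * r (t - v)) + integral {S..t} (\<lambda>v. lam v * r (t - v))
        = integral {0..t} (\<lambda>v. lam v * r (t - v))"
    by (rule Henstock_Kurzweil_Integration.integral_combine) (use t0 S in \<open>auto intro: intc[OF lrc]\<close>)
  have splitl: "integral {0..S} lam + integral {S..t} lam = integral {0..t} lam"
    by (rule Henstock_Kurzweil_Integration.integral_combine) (use t0 S in \<open>auto intro: lamI\<close>)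
  have tailb: "integral {S..t} (\<lambda>v. lam v * r (t - v)) \<le> integral {S..t} lam"
  proof (rule integral_le)
    show "(\<lambda>v. lam v * r (t - v)) integrable_on {S..t}" by (rule intc[OF lrc]) (use S in auto)
    show "lam integrable_on {S..t}" by (rule lamI) (use S in auto)
    show "lam v * r (t - v) \<le> lam v" if "v \<in> {S..t}" for v
    proof -
      have "lam v * r (t - v) \<le> lam v * 1"
        using lam_nonneg[of v] r_le1[of "t - v"] that S by (intro mult_left_mono) auto
      thus ?thesis by simp
    qed
  qed
  have P: "integral {0..S} (\<lambda>v. lam v * r (t - v)) = (r t - 2*\<delta>) * integral {0..S} lam + integral {0..S} (\<lambda>v. lam v * E v)"
  proof -
    have i1: "(\<lambda>v. (r t - 2*\<delta>) * lam v) integrable_on {0..S}"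
      using integrable_on_cmult_left[OF lamI[of 0 S, simplified], of "r t - 2*\<delta>"] by simp
    have i2: "(\<lambda>v. lam v * E v) integrable_on {0..S}"
      by (rule intc[where t=t]) (intro continuous_intros continuous_on_subset[OF lam_cont] Ec, use t0 in auto)
    have "integral {0..S} (\<lambda>v. lam v * r (t - v)) = integral {0..S} (\<lambda>v. (r t - 2*\<delta>) * lam v + lam v * E v)"
      by (rule integral_cong) (simp add: E_def algebra_simps)
    also have "\<dots> = (r t - 2*\<delta>) * integral {0..S} lam + integral {0..S} (\<lambda>v. lam v * E v)"
      using integral_add[OF i1 i2] by simp
    finally show ?thesis .
  qed
  have L0: "integral {0..S} lam \<ge> 0"
    by (rule integral_nonneg[OF lamI]) (auto intro: lam_nonneg)
  have e1: "2*\<delta> * integral {0..S} lam \<ge> 0" using \<delta> L0 by simp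
  have e2: "(r t - 2*\<delta>) * integral {0..S} lam = r t * integral {0..S} lam - 2*\<delta> * integral {0..S} lam"
    by (simp add: algebra_simps)
  have e3: "r t * (1 + integral {0..S} lam) \<le> (m + \<delta>/2) * (1 + integral {0..S} lam)"
    using rt L0 by (intro mult_right_mono) auto
  have e4: "r t * (1 + integral {0..S} lam) = r t + r t * integral {0..S} lam" by (simp add: algebra_simps)
  have f1: "1 = r t + integral {0..S} (\<lambda>v. lam v * r (t - v)) + integral {S..t} (\<lambda>v. lam v * r (t - v))"
    using phi_lag[OF t0(1)] spl by linarith
  have f2: "integral {0..S} (\<lambda>v. lam v * r (t - v)) \<le> r t * integral {0..S} lam + K / c * (4 + 2*K) * \<delta>"
    using P e1 e2 LE by linarith
  have f3: "integral {S..t} (\<lambda>v. lam v * r (t - v)) \<le> integral {0..t} lam - integral {0..S} lam"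
    using tailb splitl by linarith
  have "1 \<le> r t * (1 + integral {0..S} lam) + K / c * (4 + 2*K) * \<delta> + (integral {0..t} lam - integral {0..S} lam)"
    using f1 f2 f3 e4 by linarith
  thus ?thesis using e3 by linarith
qed

end



locale full = kdecay + rset
begin

lemma lam_small: "\<delta> > 0 \<Longrightarrow> \<exists>T1. \<forall>u\<ge>T1. lam u \<le> \<delta>"
proof -
  assume d: "\<delta> > 0"
  from order_tendstoD(2)[OF tlam_lim d] obtain T where T: "\<And>u. u \<ge> T \<Longrightarrow> u * lam u < \<delta>"
    by (auto simp: eventually_at_top_linorder)
  have "lam u \<le> \<delta>" if "u \<ge> max T 1" for u
  proof -
    have "lam u * 1 \<le> lam u * u" using that lam_nonneg[of u] by (intro mult_left_mono) auto
    thus ?thesis using T[of u] that by (simp add: mult.commute)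
  qed
  thus ?thesis by blast
qed

lemma kmin: "S > 0 \<Longrightarrow> \<exists>c>0. \<forall>v\<in>{0..S}. c \<le> k v"
proof -
  assume S: "S > 0"
  have "continuous_on {0..S} k" by (rule continuous_on_subset[OF k_cont]) auto
  then obtain x where x: "x \<in> {0..S}" "\<And>y. y \<in> {0..S} \<Longrightarrow> k x \<le> k y"
    using continuous_attains_inf[of "{0..S}" k] S by auto
  thus ?thesis using k_pos[of x] by (intro exI[of _ "k x"]) auto
qed

lemma mu_nonneg: "\<mu> \<ge> 0"
  unfolding \<mu>_def by (rule integral_nonneg[OF lam_int]) (auto intro: lam_nonneg)

lemma Lam_le_mu: "t \<ge> 0 \<Longrightarrow> integral {0..t} lam \<le> \<mu>"
proof -
  assume t: "t \<ge> 0"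
  have "integral {0..} lam = integral {0..t} lam + integral {t..} lam"
    by (rule split_Ici[OF lam_int]) (use t lam_nonneg lamI in auto)
  moreover have "integral {t..} lam \<ge> 0"
    by (rule integral_nonneg[OF nonneg_int_Ici[OF lam_int]]) (use t lam_nonneg in auto)
  ultimately show ?thesis unfolding \<mu>_def by linarith
qed

definition D where "D t = - K * r t + Cv t"

lemma rD: "t \<ge> 0 \<Longrightarrow> (r has_real_derivative D t) (at t within {0..})"
  using r_deriv by (simp add: D_def Cv_def)

lemma r_bnd: "t \<ge> 0 \<Longrightarrow> \<bar>r t\<bar> \<le> 1"
  using r_pos r_le1 by (simp add: abs_le_iff) (meson less_imp_le order_trans neg_le_0_iff_le zero_le_one)

lemma upper:
  assumes M1: "\<forall>\<delta>>0. \<exists>T0\<ge>0. \<forall>t\<ge>T0. r t \<le> M + \<delta>" and M2: "\<forall>\<delta>>0. \<forall>T. \<exists>t\<ge>T. r t > M - \<delta>"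
  shows "M * (1 + \<mu>) \<le> 1"
proof -
  have stepS: "M * (1 + integral {0..S} lam) \<le> 1" if S: "S > 0" for S
  proof -
    obtain c where c: "c > 0" "\<And>v. v \<in> {0..S} \<Longrightarrow> c \<le> k v" using kmin[OF S] by auto
    define Q where "Q = K / c * (3 + 2*K)"
    have Q0: "Q \<ge> 0" using K_nonneg c by (simp add: Q_def)
    have L0: "integral {0..S} lam \<ge> 0" by (rule integral_nonneg[OF lamI]) (auto intro: lam_nonneg)
    have "M * (1 + integral {0..S} lam) \<le> 1 + (Q + (1 + integral {0..S} lam)/2) * \<delta>" if d: "\<delta> > 0" for \<delta>
    proof -
      obtain T0 where T0: "T0 \<ge> 0" "\<And>t. t \<ge> T0 \<Longrightarrow> r t \<le> M + \<delta>" using M1 d by auto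
      obtain T1 where T1: "\<And>u. u \<ge> T1 \<Longrightarrow> lam u \<le> \<delta>" using lam_small[OF d] by auto
      have freq: "\<exists>t\<ge>T. r t > M - \<delta>/2" for T using M2 d by auto
      obtain t where t: "t \<ge> T0 + S + max T1 0" "r t > M - \<delta>/2" "D t \<ge> -2*\<delta>"
        using near_max[OF rD T0(1) T0(2) d freq, of "T0 + S + max T1 0"] by auto
      have "(M - \<delta>/2) * (1 + integral {0..S} lam) \<le> 1 + Q * \<delta>"
        unfolding Q_def
      proof (rule upper_step[OF S c d T0(1)])
        show "t \<ge> T0 + S" using t by auto
        have "t - T0 \<ge> S + max T1 0" using t by linarith
        moreover have "T1 \<le> max T1 0" by simp
        ultimately have "t - T0 \<ge> T1" using S by linarith
        thus "lam (t - T0) \<le> \<delta>" by (rule T1)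
        show "\<And>u. u \<ge> T0 \<Longrightarrow> r u \<le> M + \<delta>" by (rule T0(2))
        show "r t > M - \<delta>/2" by (rule t(2))
        show "- K * r t + Cv t \<ge> -2*\<delta>" using t(3) by (simp add: D_def)
      qed
      thus ?thesis by (simp add: field_simps)
    qed
    thus ?thesis by (rule eps_le) (use Q0 L0 in auto)
  qed
  have "((\<lambda>S. M * (1 + integral {0..S} lam)) \<longlongrightarrow> M * (1 + \<mu>)) at_top"
    by (intro tendsto_intros Lam_lim)
  moreover have "\<forall>\<^sub>F S in at_top. M * (1 + integral {0..S} lam) \<le> 1"
    using stepS by (auto simp: eventually_at_top_linorder intro!: exI[of _ 1])
  ultimately show ?thesis by (rule tendsto_upperbound) simp
qed

lemma lower:
  assumes m1: "\<forall>\<delta>>0. \<exists>T0\<ge>0. \<forall>t\<ge>T0. - r t \<le> m' + \<delta>" and m2: "\<forall>\<delta>>0. \<forall>T. \<exists>t\<ge>T. - r t > m' - \<delta>"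
  shows "1 \<le> (- m') * (1 + \<mu>)"
proof -
  define m where "m = - m'"
  have stepS: "1 \<le> m * (1 + integral {0..S} lam) + (\<mu> - integral {0..S} lam)" if S: "S > 0" for S
  proof -
    obtain c where c: "c > 0" "\<And>v. v \<in> {0..S} \<Longrightarrow> c \<le> k v" using kmin[OF S] by auto
    define Q where "Q = K / c * (4 + 2*K)"
    have Q0: "Q \<ge> 0" using K_nonneg c by (simp add: Q_def)
    have L0: "integral {0..S} lam \<ge> 0" by (rule integral_nonneg[OF lamI]) (auto intro: lam_nonneg)
    have "1 \<le> m * (1 + integral {0..S} lam) + (\<mu> - integral {0..S} lam) + (Q + (1 + integral {0..S} lam)/2) * \<delta>"
      if d: "\<delta> > 0" for \<delta>
    proof -
      obtain T0 where T0: "T0 \<ge> 0" "\<And>t. t \<ge> T0 \<Longrightarrow> - r t \<le> m' + \<delta>" using m1 d by auto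
      obtain T1 where T1: "\<And>u. u \<ge> T1 \<Longrightarrow> lam u \<le> \<delta>" using lam_small[OF d] by auto
      have freq: "\<exists>t\<ge>T. - r t > m' - \<delta>/2" for T using m2 d by auto
      have dneg: "((\<lambda>x. - r x) has_real_derivative - D t) (at t within {0..})" if "t \<ge> 0" for t
        using DERIV_minus[OF rD[OF that]] .
      obtain t where t: "t \<ge> T0 + S + max T1 0" "- r t > m' - \<delta>/2" "- D t \<ge> -2*\<delta>"
        using near_max[where f="\<lambda>x. - r x" and D="\<lambda>x. - D x", OF dneg T0(1) T0(2) d freq,
            of "T0 + S + max T1 0"] by auto
      have "1 \<le> (m + \<delta>/2) * (1 + integral {0..S} lam) + Q * \<delta> + (integral {0..t} lam - integral {0..S} lam)"
        unfolding Q_def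
      proof (rule lower_step[OF S c d T0(1)])
        show "t \<ge> T0 + S" using t by auto
        have "t - T0 \<ge> S + max T1 0" using t by linarith
        moreover have "T1 \<le> max T1 0" by simp
        ultimately have "t - T0 \<ge> T1" using S by linarith
        thus "lam (t - T0) \<le> \<delta>" by (rule T1)
        show "r u \<ge> m - \<delta>" if "u \<ge> T0" for u using T0(2)[OF that] by (simp add: m_def)
        show "r t < m + \<delta>/2" using t(2) by (simp add: m_def)
        show "- K * r t + Cv t \<le> 2*\<delta>" using t(3) by (simp add: D_def)
      qed
      moreover have "integral {0..t} lam \<le> \<mu>" using t S T0 by (intro Lam_le_mu) auto
      ultimately show ?thesis by (simp add: field_simps)
    qed
    hence "1 - (m * (1 + integral {0..S} lam) + (\<mu> - integral {0..S} lam)) \<le> 0 + (Q + (1 + integral {0..S} lam)/2) * \<delta>"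
      if "\<delta> > 0" for \<delta> using that by force
    hence "1 - (m * (1 + integral {0..S} lam) + (\<mu> - integral {0..S} lam)) \<le> 0"
      by (rule eps_le) (use Q0 L0 in auto)
    thus ?thesis by simp
  qed
  have "((\<lambda>S. m * (1 + integral {0..S} lam) + (\<mu> - integral {0..S} lam)) \<longlongrightarrow> m * (1 + \<mu>) + (\<mu> - \<mu>)) at_top"
    by (intro tendsto_intros Lam_lim)
  moreover have "\<forall>\<^sub>F S in at_top. 1 \<le> m * (1 + integral {0..S} lam) + (\<mu> - integral {0..S} lam)"
    using stepS by (auto simp: eventually_at_top_linorder intro!: exI[of _ 1])
  ultimately have "1 \<le> m * (1 + \<mu>) + (\<mu> - \<mu>)" by (rule tendsto_lowerbound) simp
  thus ?thesis by (simp add: m_def)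
qed

lemma r_lim: "(r \<longlongrightarrow> 1 / (1 + \<mu>)) at_top"
proof -
  obtain M where M1: "\<forall>\<delta>>0. \<exists>T0\<ge>0. \<forall>t\<ge>T0. r t \<le> M + \<delta>" and M2: "\<forall>\<delta>>0. \<forall>T. \<exists>t\<ge>T. r t > M - \<delta>"
    using limsup_exists[of r 1] r_bnd by blast
  obtain m' where m1: "\<forall>\<delta>>0. \<exists>T0\<ge>0. \<forall>t\<ge>T0. - r t \<le> m' + \<delta>" and m2: "\<forall>\<delta>>0. \<forall>T. \<exists>t\<ge>T. - r t > m' - \<delta>"
    using limsup_exists[of "\<lambda>t. - r t" 1] r_bnd by auto
  have pos: "1 + \<mu> > 0" using mu_nonneg by simp
  define LL where "LL = 1 / (1 + \<mu>)"
  have Mle: "M \<le> LL" using upper[OF M1 M2] pos by (simp add: field_simps LL_def)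
  have mge: "LL \<le> - m'" using lower[OF m1 m2] pos by (simp add: field_simps LL_def)
  show ?thesis unfolding LL_def[symmetric]
  proof (rule order_tendstoI)
    fix y assume y: "y < LL"
    define \<delta> where "\<delta> = (LL - y) / 2"
    have d: "\<delta> > 0" using y by (simp add: \<delta>_def)
    then obtain T0 where T0: "\<forall>t\<ge>T0. - r t \<le> m' + \<delta>" using m1 by auto
    have "\<forall>t\<ge>T0. y < r t"
    proof (intro allI impI)
      fix t assume "t \<ge> T0"
      hence "- r t \<le> m' + \<delta>" using T0 by auto
      thus "y < r t" using mge y unfolding \<delta>_def by (simp add: field_simps)
    qed
    thus "\<forall>\<^sub>F t in at_top. y < r t" by (auto simp: eventually_at_top_linorder)
  next
    fix y assume y: "y > LL"
    define \<delta> where "\<delta> = (y - LL) / 2"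
    have d: "\<delta> > 0" using y by (simp add: \<delta>_def)
    then obtain T0 where T0: "\<forall>t\<ge>T0. r t \<le> M + \<delta>" using M1 by auto
    have "\<forall>t\<ge>T0. r t < y"
    proof (intro allI impI)
      fix t assume "t \<ge> T0"
      hence "r t \<le> M + \<delta>" using T0 by auto
      thus "r t < y" using Mle y unfolding \<delta>_def by (simp add: field_simps)
    qed
    thus "\<forall>\<^sub>F t in at_top. r t < y" by (auto simp: eventually_at_top_linorder)
  qed
qed

end

theorem corollary3p2:
  fixes k L r :: "real \<Rightarrow> real" and \<alpha> a :: real
  assumes k_int: "k integrable_on {0..}"
    and k_cont: "continuous_on {0..} k"
    and k_pos: "\<forall>t\<ge>0. k t > 0"
    and alpha: "\<alpha> > 1"
    and L_sv: "slowly_varying L"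
    and tail: "\<forall>t>0. integral {t..} k = L t * t powr (- \<alpha>)"
    and a_def: "a = - integral {0..} k"
    and r_cont: "continuous_on {0..} r"
    and r0: "r 0 = 1"
    and r_eq: "\<forall>t\<ge>0. (r has_real_derivative
                 (a * r t + integral {0..t} (\<lambda>s. k (t - s) * r s))) (at t within {0..})"
  shows "(\<lambda>s. s * k s) integrable_on {0..}
         \<and> (r \<longlongrightarrow> 1 / (1 + integral {0..} (\<lambda>s. s * k s))) at_top"
proof -
  have kk: "kset k"
  proof
    show "continuous_on {0..} k" by (rule k_cont)
    show "\<And>t. 0 \<le> t \<Longrightarrow> 0 < k t" using k_pos by auto
    show "k integrable_on {0..}" by (rule k_int)
  qed
  interpret full k \<alpha> L r
  proof (unfold_locales)
    show "continuous_on {0..} k" by (rule k_cont)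
    show "\<And>t. 0 \<le> t \<Longrightarrow> 0 < k t" using k_pos by auto
    show "k integrable_on {0..}" by (rule k_int)
    show "1 < \<alpha>" by (rule alpha)
    show "slowly_varying L" by (rule L_sv)
    show "\<forall>t>0. integral {t..} k = L t * t powr - \<alpha>" by (rule tail)
    show "continuous_on {0..} r" by (rule r_cont)
    show "r 0 = 1" by (rule r0)
    show "(r has_real_derivative - kset.K k * r t + integral {0..t} (\<lambda>s. k (t - s) * r s)) (at t within {0..})"
      if "0 \<le> t" for t
      using r_eq that a_def by (simp add: kset.K_def[OF kk])
  qed
  have "((\<lambda>s. s * k s) has_integral \<mu>) {0..}" by (rule sk_has_integral)
  hence "(\<lambda>s. s * k s) integrable_on {0..}" "integral {0..} (\<lambda>s. s * k s) = \<mu>"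
    by (auto simp: integrable_on_def integral_unique)
  thus ?thesis using r_lim by simp
qed

end
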